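(* Let $V,W$ be real inner product spaces of dimension $2$ and $3$ respectively. For $\epsilon\ge0$ and $L\in\mathrm{Hom}(V,W)$ set $q_\epsilon(L)=\operatorname{tr}\sqrt{\epsilon^2\mathbb 1+L^*L}$. Then: (a) $q_\epsilon(L)=\sqrt{\operatorname{tr}(\epsilon^2\mathbb 1+L^*L)+2\sqrt{\det(\epsilon^2\mathbb 1+L^*L)}}$ for all $L$; consequently $q_\epsilon$ is smooth for $\epsilon>0$. (b) $q_\epsilon$ is convex for every $\epsilon\ge0$. (c) Let $L\in\mathrm{Hom}(V,W)$, let $A:W\to W$ be nonnegative self-adjoint and let $\epsilon\ge0$, assuming moreover that $L$ has rank $2$ if $\epsilon=0$. Then $\frac{d}{dt}q_\epsilon((\mathbb 1+tA)L)\big|_{t=0}\ge0$, with strict inequality if $A\circ L\neq0$.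
   Context: $L^*$ denotes the adjoint of $L$; $\mathbb 1$ is the identity of $V$. *)

theory Defs
  imports "HOL-Analysis.Analysis"
begin

text \<open>Hom(V,W) with V = R^2, W = R^3 (standard inner products) is represented by
  real 3x2 matrices; the adjoint is the transpose.\<close>

definition psd_matrix :: "real^'n^'n \<Rightarrow> bool" where
  "psd_matrix M \<longleftrightarrow> transpose M = M \<and> (\<forall>x. 0 \<le> x \<bullet> (M *v x))"

definition psd_sqrt :: "real^'n^'n \<Rightarrow> real^'n^'n" where
  "psd_sqrt M = (THE S. psd_matrix S \<and> S ** S = M)"

definition q_eps :: "real \<Rightarrow> real^2^3 \<Rightarrow> real" where
  "q_eps \<epsilon> L = trace (psd_sqrt (\<epsilon>\<^sup>2 *\<^sub>R mat 1 + transpose L ** L))"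

text \<open>C-infinity smoothness of a real-valued function on a finite-dimensional space:
  f belongs to a family of everywhere (Frechet) differentiable functions closed under
  taking directional derivatives; equivalently all iterated derivatives exist
  everywhere.\<close>
definition C_infinity :: "('a::real_normed_vector \<Rightarrow> real) \<Rightarrow> bool" where
  "C_infinity f \<longleftrightarrow> (\<exists>S. f \<in> S \<and> (\<forall>g\<in>S. (\<forall>x. g differentiable (at x)) \<and>
      (\<forall>v. (\<lambda>x. frechet_derivative g (at x) v) \<in> S)))"

end

theory Submission
  imports Defs
begin

lemma quad_nonneg:
  fixes p r w :: real
  assumes "\<forall>x y. 0 \<le> p*x^2 + 2*r*x*y + w*y^2"
  shows "0 \<le> p \<and> 0 \<le> w \<and> r^2 \<le> p*w"
proof -
  have p: "0 \<le> p" using assms[rule_format, of 1 0] by simp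
  have w: "0 \<le> w" using assms[rule_format, of 0 1] by simp
  have h1: "0 \<le> p*(p*w - r^2)" using assms[rule_format, of r "-p"] by (simp add: power2_eq_square algebra_simps)
  have h2: "0 \<le> w*(p*w - r^2)" using assms[rule_format, of w "-r"] by (simp add: power2_eq_square algebra_simps)
  have h3: "0 \<le> p - 2*r^2 + w*r^2" using assms[rule_format, of 1 "-r"] by (simp add: power2_eq_square algebra_simps)
  show ?thesis
  proof (cases "p = 0 \<and> w = 0")
    case True then show ?thesis using h3 by (simp add: power2_eq_square)
  next
    case False
    then have "p > 0 \<or> w > 0" using p w by auto
    then show ?thesis using h1 h2 p w by (auto simp: zero_le_mult_iff)
  qed
qed

lemma quad_nonneg_conv:
  fixes p r w :: real
  assumes "0 \<le> p" "0 \<le> w" "r^2 \<le> p*w"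
  shows "0 \<le> p*x^2 + 2*r*x*y + w*y^2"
proof (cases "p = 0")
  case True
  then have "r*r \<le> 0" using assms by (simp add: power2_eq_square)
  then have "r = 0" by (smt (verit) mult_eq_0_iff zero_le_square)
  then show ?thesis using True assms by simp
next
  case False
  then have pp: "p > 0" using assms by simp
  have "p*(p*x^2 + 2*r*x*y + w*y^2) = (p*x + r*y)^2 + (p*w - r^2)*y^2"
    by (simp add: power2_eq_square algebra_simps)
  also have "\<dots> \<ge> 0" using assms by simp
  finally show ?thesis using pp by (simp add: zero_le_mult_iff)
qed


lemma eq22: "(A::'a^2^2) = B \<longleftrightarrow> A$1$1 = B$1$1 \<and> A$1$2 = B$1$2 \<and> A$2$1 = B$2$1 \<and> A$2$2 = B$2$2"
  by (auto simp: vec_eq_iff forall_2)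

lemma mult22: "(A ** B)$i$j = A$i$1*B$1$j + A$i$2*B$2$j" for A B :: "'a::comm_semiring_1^2^2"
  by (simp add: matrix_matrix_mult_def sum_2)

lemma trace22: "trace (A::'a::semiring_1^2^2) = A$1$1 + A$2$2"
  by (simp add: trace_def sum_2)

lemma quadform2: "x \<bullet> (M *v x) = M$1$1*(x$1)^2 + (M$1$2+M$2$1)*x$1*x$2 + M$2$2*(x$2)^2"
  for M :: "real^2^2"
  by (simp add: inner_vec_def matrix_vector_mult_def sum_2 power2_eq_square algebra_simps)

lemma psd2_iff: "psd_matrix (M::real^2^2) \<longleftrightarrow>
   M$1$2 = M$2$1 \<and> 0 \<le> M$1$1 \<and> 0 \<le> M$2$2 \<and> (M$1$2)^2 \<le> M$1$1*M$2$2"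
proof
  assume a: "psd_matrix M"
  have "(transpose M)$1$2 = M$1$2" using a unfolding psd_matrix_def by simp
  then have sym: "M$1$2 = M$2$1" by (simp add: transpose_def)
  have "\<forall>x y. 0 \<le> M$1$1*x^2 + 2*(M$1$2)*x*y + M$2$2*y^2"
  proof (intro allI)
    fix x y :: real
    have "0 \<le> (vector [x,y]::real^2) \<bullet> (M *v vector [x,y])" using a unfolding psd_matrix_def by blast
    then show "0 \<le> M$1$1*x^2 + 2*(M$1$2)*x*y + M$2$2*y^2" using sym
      by (simp add: quadform2)
  qed
  from quad_nonneg[OF this] sym show "M$1$2 = M$2$1 \<and> 0 \<le> M$1$1 \<and> 0 \<le> M$2$2 \<and> (M$1$2)^2 \<le> M$1$1*M$2$2" by simp
next
  assume a: "M$1$2 = M$2$1 \<and> 0 \<le> M$1$1 \<and> 0 \<le> M$2$2 \<and> (M$1$2)^2 \<le> M$1$1*M$2$2"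
  have "transpose M = M" using a by (simp add: eq22 transpose_def)
  moreover have "0 \<le> x \<bullet> (M *v x)" for x
  proof -
    have "0 \<le> M$1$1*(x$1)^2 + 2*(M$1$2)*x$1*x$2 + M$2$2*(x$2)^2"
      by (rule quad_nonneg_conv) (use a in auto)
    then show ?thesis using a by (simp add: quadform2)
  qed
  ultimately show "psd_matrix M" unfolding psd_matrix_def by blast
qed

lemma psd_square_facts:
  fixes S M :: "real^2^2"
  assumes S: "psd_matrix S" and SS: "S ** S = M"
  shows "trace S = sqrt (trace M + 2 * sqrt (det M))"
    and "trace S = 0 \<Longrightarrow> S = 0"
    and "trace S \<noteq> 0 \<Longrightarrow> S = (1/trace S) *\<^sub>R (M + sqrt (det M) *\<^sub>R mat 1)"
proof -
  define a where "a = S$1$1"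
  define b where "b = S$1$2"
  define c where "c = S$2$2"
  have s: "S$2$1 = b" "0 \<le> a" "0 \<le> c" "b^2 \<le> a*c" using S unfolding psd2_iff a_def b_def c_def by auto
  have M: "M$1$1 = a^2+b^2" "M$1$2 = a*b+b*c" "M$2$1 = a*b+b*c" "M$2$2 = b^2+c^2"
    using SS[symmetric] s(1) by (simp_all add: mult22 a_def b_def c_def power2_eq_square algebra_simps)
  have "det M = (a*c-b^2)^2" by (simp add: det_2 M power2_eq_square algebra_simps)
  then have dM: "sqrt (det M) = a*c - b^2" using s by simp
  have "trace M + 2 * sqrt (det M) = (a+c)^2" by (simp add: trace22 M dM power2_eq_square algebra_simps)
  then have tS: "sqrt (trace M + 2 * sqrt (det M)) = a + c" using s by simp
  have trS: "trace S = a + c" by (simp add: trace22 a_def c_def)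
  show "trace S = sqrt (trace M + 2 * sqrt (det M))" using tS trS by simp
  show "trace S = 0 \<Longrightarrow> S = 0"
  proof -
    assume "trace S = 0"
    then have "a = 0" "c = 0" using trS s by auto
    then have "b = 0" using s by simp
    then show "S = 0" using \<open>a = 0\<close> \<open>c = 0\<close> s unfolding eq22 a_def b_def c_def by simp
  qed
  show "trace S \<noteq> 0 \<Longrightarrow> S = (1/trace S) *\<^sub>R (M + sqrt (det M) *\<^sub>R mat 1)"
  proof -
    assume "trace S \<noteq> 0"
    then have ne: "a + c \<noteq> 0" using trS by simp
    have e1: "(a^2 + a*c)/(a+c) = a" using ne by (simp add: field_simps power2_eq_square)
    have e2: "(a*b+b*c)/(a+c) = b" using ne by (simp add: field_simps)
    have e3: "(c^2 + a*c)/(a+c) = c" using ne by (simp add: field_simps power2_eq_square)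
    show ?thesis unfolding eq22 trS dM using s(1)
      by (simp add: M mat_def) (simp add: e1 e2 e3 flip: a_def b_def c_def)
  qed
qed



lemma psd_sqrt_exists:
  fixes M :: "real^2^2"
  assumes M: "psd_matrix M"
  shows "\<exists>S. psd_matrix S \<and> S ** S = M"
proof (cases "M = 0")
  case True
  then show ?thesis by (intro exI[of _ 0]) (simp add: psd_matrix_def transpose_def vec_eq_iff)
next
  case False
  define p where "p = M$1$1"
  define r where "r = M$1$2"
  define w where "w = M$2$2"
  have m: "M$2$1 = r" "0 \<le> p" "0 \<le> w" "r^2 \<le> p*w" using M unfolding psd2_iff p_def r_def w_def by auto
  define d where "d = sqrt (p*w - r^2)"
  have d0: "0 \<le> d" and dd: "d^2 = p*w - r^2" using m by (auto simp: d_def)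
  have pw: "p + w > 0"
  proof (rule ccontr)
    assume "\<not> p + w > 0"
    then have "p = 0" "w = 0" using m by auto
    then have "r*r \<le> 0" using m by (simp add: power2_eq_square)
    then have "r = 0" by (smt (verit) mult_eq_0_iff zero_le_square)
    then show False using False \<open>p = 0\<close> \<open>w = 0\<close> m(1) unfolding eq22 p_def r_def w_def by simp
  qed
  define s where "s = sqrt (p + w + 2 * d)"
  have s0: "s > 0" and ss: "s^2 = p + w + 2 * d" using pw d0 by (auto simp: s_def)
  define S :: "real^2^2" where "S = (1/s) *\<^sub>R (M + d *\<^sub>R mat 1)"
  have S: "S$1$1 = (p+d)/s" "S$1$2 = r/s" "S$2$1 = r/s" "S$2$2 = (w+d)/s"
    by (simp_all add: S_def mat_def m(1) flip: p_def r_def w_def)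
  have "psd_matrix S"
    unfolding psd2_iff S
  proof (intro conjI)
    show "0 \<le> (p + d) / s" "0 \<le> (w + d) / s" using m d0 s0 by auto
    have "0 \<le> d*(p+w) + d^2" using d0 m by simp
    moreover have "(p+d)*(w+d) = p*w + (d*(p+w)+d^2)" by (simp add: algebra_simps power2_eq_square)
    ultimately have "r^2 \<le> (p+d)*(w+d)" using m by linarith
    then have "r^2/s^2 \<le> ((p+d)*(w+d))/s^2" by (rule divide_right_mono) simp
    moreover have "(r/s)^2 = r^2/s^2" by (simp add: power_divide)
    moreover have "(p+d)/s*((w+d)/s) = ((p+d)*(w+d))/s^2" by (simp add: power2_eq_square)
    ultimately show "(r / s)\<^sup>2 \<le> (p + d) / s * ((w + d) / s)" by linarith
  qed simp
  moreover have "S ** S = M"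
  proof -
    have s2: "s * s = s^2" by (simp add: power2_eq_square)
    have "((p+d)*(p+d) + r*r) = p * s^2" unfolding ss using dd by (simp add: power2_eq_square algebra_simps)
    moreover have "(p+d)*r + r*(w+d) = r * s^2" unfolding ss by (simp add: algebra_simps)
    moreover have "r*(p+d) + (w+d)*r = r * s^2" unfolding ss by (simp add: algebra_simps)
    moreover have "r*r + (w+d)*(w+d) = w * s^2" unfolding ss using dd by (simp add: power2_eq_square algebra_simps)
    moreover have "(S**S)$1$1 = ((p+d)*(p+d) + r*r)/(s * s)" "(S**S)$1$2 = ((p+d)*r + r*(w+d))/(s * s)"
      "(S**S)$2$1 = (r*(p+d) + (w+d)*r)/(s * s)" "(S**S)$2$2 = (r*r + (w+d)*(w+d))/(s * s)"
      using s0 by (simp_all add: mult22 S field_simps)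
    ultimately have "(S**S)$1$1 = p" "(S**S)$1$2 = r" "(S**S)$2$1 = r" "(S**S)$2$2 = w"
      using s0 by (simp_all add: s2)
    then show ?thesis unfolding eq22 using m(1) by (simp add: p_def r_def w_def)
  qed
  ultimately show ?thesis by blast
qed

lemma psd_sqrt_unique:
  fixes M :: "real^2^2"
  assumes "psd_matrix S1" "S1 ** S1 = M" "psd_matrix S2" "S2 ** S2 = M"
  shows "S1 = S2"
proof -
  note f1 = psd_square_facts[OF assms(1,2)] and f2 = psd_square_facts[OF assms(3,4)]
  show ?thesis
  proof (cases "trace S1 = 0")
    case True
    then have "trace S2 = 0" using f1(1) f2(1) by simp
    then show ?thesis using True f1(2) f2(2) by simp
  next
    case False
    then have "trace S2 \<noteq> 0" "trace S2 = trace S1" using f1(1) f2(1) by simp_all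
    then show ?thesis using False f1(3) f2(3) by simp
  qed
qed

lemma psd_sqrt2:
  fixes M :: "real^2^2"
  assumes M: "psd_matrix M"
  shows "psd_matrix (psd_sqrt M) \<and> psd_sqrt M ** psd_sqrt M = M"
proof -
  have "\<exists>!S. psd_matrix S \<and> S ** S = M"
    using psd_sqrt_exists[OF M] psd_sqrt_unique by blast
  then show ?thesis unfolding psd_sqrt_def by (rule theI')
qed

lemma trace_psd_sqrt2:
  fixes M :: "real^2^2"
  assumes M: "psd_matrix M"
  shows "trace (psd_sqrt M) = sqrt (trace M + 2 * sqrt (det M))"
  using psd_sqrt2[OF M] psd_square_facts by blast



lemma mixed_nonneg:
  fixes a11 a22 a12 b11 b22 b12 :: real
  assumes "0 \<le> a11" "0 \<le> a22" "a12^2 \<le> a11*a22" "0 \<le> b11" "0 \<le> b22" "b12^2 \<le> b11*b22"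
  shows "2*a12*b12 \<le> a11*b22 + a22*b11"
proof -
  define X where "X = a11*b22"
  define Y where "Y = a22*b11"
  have X0: "0 \<le> X" and Y0: "0 \<le> Y" using assms by (simp_all add: X_def Y_def)
  have "(a12*b12)^2 \<le> X*Y"
  proof -
    have "(a12*b12)^2 = a12^2 * b12^2" by (simp add: power_mult_distrib)
    also have "\<dots> \<le> (a11*a22)*(b11*b22)" using assms by (intro mult_mono) auto
    also have "\<dots> = X*Y" by (simp add: X_def Y_def algebra_simps)
    finally show ?thesis .
  qed
  moreover have "4*(X*Y) \<le> (X+Y)^2"
  proof -
    have "(X+Y)^2 - 4*(X*Y) = (X-Y)^2" by (simp add: power2_eq_square algebra_simps)
    then show ?thesis by (smt (verit) zero_le_power2)
  qed
  ultimately have "(2*a12*b12)^2 \<le> (X+Y)^2" by (simp add: power_mult_distrib power2_eq_square algebra_simps)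
  then have "\<bar>2*a12*b12\<bar> \<le> \<bar>X+Y\<bar>" by (simp add: abs_le_square_iff)
  then show ?thesis using X0 Y0 unfolding X_def Y_def by linarith
qed

definition Qv :: "'a::real_inner \<Rightarrow> 'a \<Rightarrow> real" where
  "Qv c d = sqrt (c \<bullet> c + d \<bullet> d + 2 * sqrt ((c \<bullet> c) * (d \<bullet> d) - (c \<bullet> d)^2))"

lemma KF:
  fixes u v c d :: "'a::real_inner"
  assumes uu: "u \<bullet> u = 1" and vv: "v \<bullet> v = 1" and uv: "u \<bullet> v = 0"
  shows "u \<bullet> c + v \<bullet> d \<le> Qv c d"
proof -
  define x where "x = u \<bullet> c"
  define z where "z = v \<bullet> c"
  define y where "y = u \<bullet> d"
  define w where "w = v \<bullet> d"
  define c' where "c' = c - x *\<^sub>R u - z *\<^sub>R v"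
  define d' where "d' = d - y *\<^sub>R u - w *\<^sub>R v"
  have vu: "v \<bullet> u = 0" using uv by (simp add: inner_commute)
  have cc: "c \<bullet> c = x^2 + z^2 + c' \<bullet> c'"
    unfolding c'_def using uu vv uv vu
    by (simp add: inner_diff_left inner_diff_right x_def z_def inner_commute power2_eq_square algebra_simps)
  have dd: "d \<bullet> d = y^2 + w^2 + d' \<bullet> d'"
    unfolding d'_def using uu vv uv vu
    by (simp add: inner_diff_left inner_diff_right y_def w_def inner_commute power2_eq_square algebra_simps)
  have cd: "c \<bullet> d = x*y + z*w + c' \<bullet> d'"
    unfolding c'_def d'_def using uu vv uv vu
    by (simp add: inner_diff_left inner_diff_right x_def z_def y_def w_def inner_commute algebra_simps)
  define X where "X = x^2 + z^2"
  define Y where "Y = y^2 + w^2"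
  define Z where "Z = x*y + z*w"
  define P where "P = c' \<bullet> c'"
  define R where "R = d' \<bullet> d'"
  define K where "K = c' \<bullet> d'"
  have P0: "0 \<le> P" and R0: "0 \<le> R" by (simp_all add: P_def R_def)
  have KPR: "K^2 \<le> P*R" unfolding K_def P_def R_def by (rule Cauchy_Schwarz_ineq)
  have ZXY: "Z^2 \<le> X*Y"
  proof -
    have "X*Y - Z^2 = (x*w - z*y)^2" by (simp add: X_def Y_def Z_def power2_eq_square algebra_simps)
    then show ?thesis by (smt (verit) zero_le_power2)
  qed
  have mix: "2*Z*K \<le> X*R + Y*P"
    by (rule mixed_nonneg) (use ZXY KPR P0 R0 in \<open>auto simp: X_def Y_def\<close>)
  have "(c \<bullet> c) * (d \<bullet> d) - (c \<bullet> d)^2 = (X*Y - Z^2) + (X*R + Y*P - 2*Z*K) + (P*R - K^2)"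
    unfolding cc dd cd X_def[symmetric] Y_def[symmetric] Z_def[symmetric] P_def[symmetric] R_def[symmetric] K_def[symmetric]
    by (simp add: X_def Y_def power2_eq_square algebra_simps)
  also have "X*Y - Z^2 = (x*w - z*y)^2" by (simp add: X_def Y_def Z_def power2_eq_square algebra_simps)
  finally have "(x*w - z*y)^2 \<le> (c \<bullet> c) * (d \<bullet> d) - (c \<bullet> d)^2" using mix KPR by linarith
  then have sq: "\<bar>x*w - z*y\<bar> \<le> sqrt ((c \<bullet> c) * (d \<bullet> d) - (c \<bullet> d)^2)"
    using real_sqrt_le_mono by fastforce
  have "(x + w)^2 \<le> X + Y + 2*(x*w - z*y)"
  proof -
    have "X + Y + 2*(x*w - z*y) - (x+w)^2 = (y - z)^2" by (simp add: X_def Y_def power2_eq_square algebra_simps)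
    then show ?thesis by (smt (verit) zero_le_power2)
  qed
  also have "\<dots> \<le> c \<bullet> c + d \<bullet> d + 2 * sqrt ((c \<bullet> c) * (d \<bullet> d) - (c \<bullet> d)^2)"
  proof -
    define S where "S = sqrt ((c \<bullet> c) * (d \<bullet> d) - (c \<bullet> d)^2)"
    have "X + Y \<le> c \<bullet> c + d \<bullet> d" using P0 R0 cc dd unfolding X_def Y_def P_def R_def by linarith
    moreover have "x*w - z*y \<le> S" using sq abs_ge_self[of "x*w - z*y"] unfolding S_def by linarith
    ultimately show ?thesis unfolding S_def[symmetric] by (smt (verit))
  qed
  finally have "x + w \<le> Qv c d" unfolding Qv_def by (rule real_le_rsqrt)
  then show ?thesis by (simp add: x_def w_def)
qed



lemma inner_lin2:
  fixes c d :: "'a::real_inner"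
  shows "(a *\<^sub>R c + b *\<^sub>R d) \<bullet> (g *\<^sub>R c + h *\<^sub>R d)
     = a * g * (c \<bullet> c) + (a * h + b * g) * (c \<bullet> d) + b * h * (d \<bullet> d)"
  by (simp add: inner_add_left inner_add_right inner_commute algebra_simps)

lemma cert:
  fixes c d :: "'a::real_inner"
  assumes D: "(c \<bullet> c) * (d \<bullet> d) - (c \<bullet> d)^2 > 0"
  shows "\<exists>u v. u \<bullet> u = 1 \<and> v \<bullet> v = 1 \<and> u \<bullet> v = 0 \<and> u \<bullet> c + v \<bullet> d = Qv c d"
proof -
  define p where "p = c \<bullet> c"
  define w where "w = d \<bullet> d"
  define r where "r = c \<bullet> d"
  define e where "e = sqrt (p * w - r^2)"
  have p0: "0 \<le> p" and w0: "0 \<le> w" by (simp_all add: p_def w_def)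
  have e0: "e > 0" and ee: "e^2 = p * w - r^2" using D by (simp_all add: e_def p_def w_def r_def)
  define s where "s = sqrt (p + w + 2 * e)"
  have s0: "s > 0" and ss: "s^2 = p + w + 2 * e" using e0 p0 w0 by (simp_all add: s_def)
  have Q: "Qv c d = s" by (simp add: Qv_def s_def e_def p_def w_def r_def)
  have r2: "r^2 = p * w - e^2" using ee by simp
  define k where "k = s * e"
  have k0: "k \<noteq> 0" using s0 e0 by (simp add: k_def)
  define u where "u = ((w + e) / k) *\<^sub>R c + (- r / k) *\<^sub>R d"
  define v where "v = (- r / k) *\<^sub>R c + ((p + e) / k) *\<^sub>R d"
  have kk: "k^2 = e^2 * s^2" by (simp add: k_def power_mult_distrib)
  have "u \<bullet> u = ((w + e)^2 * p - 2 * (w + e) * r^2 + r^2 * w) / k^2"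
    unfolding u_def inner_lin2 using k0 by (simp add: p_def[symmetric] w_def[symmetric] r_def[symmetric] field_simps power2_eq_square)
  also have "(w + e)^2 * p - 2 * (w + e) * r^2 + r^2 * w = k^2"
    unfolding kk ss r2 by (simp add: power2_eq_square algebra_simps)
  finally have uu: "u \<bullet> u = 1" using k0 by simp
  have "v \<bullet> v = ((p + e)^2 * w - 2 * (p + e) * r^2 + r^2 * p) / k^2"
    unfolding v_def inner_lin2 using k0 by (simp add: p_def[symmetric] w_def[symmetric] r_def[symmetric] field_simps power2_eq_square)
  also have "(p + e)^2 * w - 2 * (p + e) * r^2 + r^2 * p = k^2"
    unfolding kk ss r2 by (simp add: power2_eq_square algebra_simps)
  finally have vv: "v \<bullet> v = 1" using k0 by simp
  have "u \<bullet> v = r * (r^2 + e^2 - p * w) / k^2"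
    unfolding u_def v_def inner_lin2 using k0 by (simp add: p_def[symmetric] w_def[symmetric] r_def[symmetric] field_simps power2_eq_square)
  also have "r^2 + e^2 - p * w = 0" using ee by simp
  finally have uv: "u \<bullet> v = 0" by simp
  have "u \<bullet> c + v \<bullet> d = ((w + e) * p - r^2 + (p + e) * w - r^2) / k"
    unfolding u_def v_def using k0
    by (simp add: inner_add_left inner_add_right inner_diff_left inner_diff_right inner_commute p_def[symmetric] w_def[symmetric] r_def[symmetric] field_simps power2_eq_square)
  also have "(w + e) * p - r^2 + (p + e) * w - r^2 = e * s^2"
    unfolding ss r2 by (simp add: power2_eq_square algebra_simps)
  finally have "u \<bullet> c + v \<bullet> d = s" using s0 e0 by (simp add: k_def power2_eq_square)
  then show ?thesis using uu vv uv Q by metis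
qed



definition Meps :: "real \<Rightarrow> real^2^3 \<Rightarrow> real^2^2" where
  "Meps \<epsilon> L = \<epsilon>\<^sup>2 *\<^sub>R mat 1 + transpose L ** L"

definition augA :: "real \<Rightarrow> real^2^3 \<Rightarrow> (real^2) \<times> (real^3)" where
  "augA \<epsilon> L = (\<epsilon> *\<^sub>R axis 1 1, column 1 L)"
definition augB :: "real \<Rightarrow> real^2^3 \<Rightarrow> (real^2) \<times> (real^3)" where
  "augB \<epsilon> L = (\<epsilon> *\<^sub>R axis 2 1, column 2 L)"

lemma Meps_entries:
  "Meps \<epsilon> L $ 1 $ 1 = \<epsilon>\<^sup>2 + column 1 L \<bullet> column 1 L"
  "Meps \<epsilon> L $ 1 $ 2 = column 1 L \<bullet> column 2 L"
  "Meps \<epsilon> L $ 2 $ 1 = column 1 L \<bullet> column 2 L"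
  "Meps \<epsilon> L $ 2 $ 2 = \<epsilon>\<^sup>2 + column 2 L \<bullet> column 2 L"
  by (simp_all add: Meps_def matrix_mult_transpose_dot_column mat_def inner_commute)

lemma aug_inner:
  "augA \<epsilon> L \<bullet> augA \<epsilon> L = \<epsilon>\<^sup>2 + column 1 L \<bullet> column 1 L"
  "augB \<epsilon> L \<bullet> augB \<epsilon> L = \<epsilon>\<^sup>2 + column 2 L \<bullet> column 2 L"
  "augA \<epsilon> L \<bullet> augB \<epsilon> L = column 1 L \<bullet> column 2 L"
  by (simp_all add: augA_def augB_def inner_axis_axis power2_eq_square)

lemma Meps_psd: "psd_matrix (Meps \<epsilon> L)"
  unfolding psd2_iff Meps_entries
proof (intro conjI)
  have "(column 1 L \<bullet> column 2 L)^2 \<le> (column 1 L \<bullet> column 1 L) * (column 2 L \<bullet> column 2 L)"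
    by (rule Cauchy_Schwarz_ineq)
  moreover have "0 \<le> \<epsilon>\<^sup>2 * (column 1 L \<bullet> column 1 L) + \<epsilon>\<^sup>2 * (column 2 L \<bullet> column 2 L) + \<epsilon>\<^sup>2 * \<epsilon>\<^sup>2"
    by simp
  moreover have "(\<epsilon>\<^sup>2 + column 1 L \<bullet> column 1 L) * (\<epsilon>\<^sup>2 + column 2 L \<bullet> column 2 L) = (column 1 L \<bullet> column 1 L) * (column 2 L \<bullet> column 2 L) + (\<epsilon>\<^sup>2 * (column 1 L \<bullet> column 1 L) + \<epsilon>\<^sup>2 * (column 2 L \<bullet> column 2 L) + \<epsilon>\<^sup>2 * \<epsilon>\<^sup>2)"
    by (simp add: algebra_simps)
  ultimately show "(column 1 L \<bullet> column 2 L)\<^sup>2 \<le> (\<epsilon>\<^sup>2 + column 1 L \<bullet> column 1 L) * (\<epsilon>\<^sup>2 + column 2 L \<bullet> column 2 L)"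
    by linarith
qed simp_all

lemma trace_Meps: "trace (Meps \<epsilon> L) = augA \<epsilon> L \<bullet> augA \<epsilon> L + augB \<epsilon> L \<bullet> augB \<epsilon> L"
  by (simp add: trace22 Meps_entries aug_inner)

lemma det_Meps: "det (Meps \<epsilon> L) = (augA \<epsilon> L \<bullet> augA \<epsilon> L) * (augB \<epsilon> L \<bullet> augB \<epsilon> L) - (augA \<epsilon> L \<bullet> augB \<epsilon> L)^2"
  by (simp add: det_2 Meps_entries aug_inner power2_eq_square)

lemma q_formula: "q_eps \<epsilon> L = sqrt (trace (Meps \<epsilon> L) + 2 * sqrt (det (Meps \<epsilon> L)))"
  unfolding q_eps_def Meps_def[symmetric] by (rule trace_psd_sqrt2[OF Meps_psd])

lemma q_Qv: "q_eps \<epsilon> L = Qv (augA \<epsilon> L) (augB \<epsilon> L)"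
  unfolding q_formula trace_Meps det_Meps Qv_def ..

lemma augA_affine: "augA \<epsilon> ((1 - t) *\<^sub>R x + t *\<^sub>R y) = (1 - t) *\<^sub>R augA \<epsilon> x + t *\<^sub>R augA \<epsilon> y"
  by (simp add: augA_def column_def vec_eq_iff algebra_simps scaleR_add_left[symmetric] flip: scaleR_scaleR)
lemma augB_affine: "augB \<epsilon> ((1 - t) *\<^sub>R x + t *\<^sub>R y) = (1 - t) *\<^sub>R augB \<epsilon> x + t *\<^sub>R augB \<epsilon> y"
  by (simp add: augB_def column_def vec_eq_iff algebra_simps scaleR_add_left[symmetric] flip: scaleR_scaleR)

lemma det_pos: "\<epsilon> \<noteq> 0 \<Longrightarrow> det (Meps \<epsilon> L) > 0"
proof -
  assume e: "\<epsilon> \<noteq> 0"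
  have "(column 1 L \<bullet> column 2 L)^2 \<le> (column 1 L \<bullet> column 1 L) * (column 2 L \<bullet> column 2 L)"
    by (rule Cauchy_Schwarz_ineq)
  moreover have "0 < \<epsilon>\<^sup>2 * (column 1 L \<bullet> column 1 L) + \<epsilon>\<^sup>2 * (column 2 L \<bullet> column 2 L) + \<epsilon>\<^sup>2 * \<epsilon>\<^sup>2"
    using e by (simp add: add_nonneg_pos)
  ultimately show ?thesis by (simp add: det_2 Meps_entries power2_eq_square algebra_simps)
qed

lemma convex_pos: "\<epsilon> \<noteq> 0 \<Longrightarrow> convex_on UNIV (q_eps \<epsilon>)"
proof (rule convex_onI)
  fix t :: real and x y :: "real^2^3"
  assume e: "\<epsilon> \<noteq> 0"
  define z where "z = (1 - t) *\<^sub>R x + t *\<^sub>R y"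
  have "(augA \<epsilon> z \<bullet> augA \<epsilon> z) * (augB \<epsilon> z \<bullet> augB \<epsilon> z) - (augA \<epsilon> z \<bullet> augB \<epsilon> z)^2 > 0"
    using det_pos[OF e, of z] by (simp add: det_Meps)
  from cert[OF this] obtain u v where uv: "u \<bullet> u = 1" "v \<bullet> v = 1" "u \<bullet> v = 0"
    and eq: "u \<bullet> augA \<epsilon> z + v \<bullet> augB \<epsilon> z = Qv (augA \<epsilon> z) (augB \<epsilon> z)" by blast
  assume t: "0 < t" "t < 1"
  have "q_eps \<epsilon> z = u \<bullet> augA \<epsilon> z + v \<bullet> augB \<epsilon> z" using eq q_Qv by simp
  also have "\<dots> = (1 - t) * (u \<bullet> augA \<epsilon> x + v \<bullet> augB \<epsilon> x) + t * (u \<bullet> augA \<epsilon> y + v \<bullet> augB \<epsilon> y)"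
    unfolding z_def augA_affine augB_affine by (simp add: inner_add_right algebra_simps)
  also have "\<dots> \<le> (1 - t) * q_eps \<epsilon> x + t * q_eps \<epsilon> y"
    unfolding q_Qv using t KF[OF uv] by (intro add_mono mult_left_mono) auto
  finally show "q_eps \<epsilon> ((1 - t) *\<^sub>R x + t *\<^sub>R y) \<le> (1 - t) * q_eps \<epsilon> x + t * q_eps \<epsilon> y"
    by (simp add: z_def)
qed simp



lemma q_explicit: "q_eps \<epsilon> L = sqrt ((\<epsilon>\<^sup>2 + column 1 L \<bullet> column 1 L) + (\<epsilon>\<^sup>2 + column 2 L \<bullet> column 2 L)
   + 2 * sqrt ((\<epsilon>\<^sup>2 + column 1 L \<bullet> column 1 L) * (\<epsilon>\<^sup>2 + column 2 L \<bullet> column 2 L) - (column 1 L \<bullet> column 2 L)^2))"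
  unfolding q_formula trace22 det_2 Meps_entries by (simp add: power2_eq_square)

lemma q_cont: "((\<lambda>e. q_eps e L) \<longlongrightarrow> q_eps 0 L) (at_right 0)"
proof -
  have "isCont (\<lambda>e. q_eps e L) 0" unfolding q_explicit by (intro continuous_intros)
  then have "((\<lambda>e. q_eps e L) \<longlongrightarrow> q_eps 0 L) (at 0)" by (simp add: isCont_def)
  then show ?thesis by (rule tendsto_mono[rotated]) (simp add: at_le)
qed

lemma convex_all: "convex_on UNIV (q_eps \<epsilon>)"
proof (cases "\<epsilon> = 0")
  case False
  then show ?thesis by (rule convex_pos)
next
  case True
  show ?thesis
  proof (rule convex_onI)
    fix t :: real and x y :: "real^2^3"
    assume t: "0 < t" "t < 1"
    have ev: "\<forall>\<^sub>F e in at_right 0. q_eps e ((1 - t) *\<^sub>R x + t *\<^sub>R y) \<le> (1 - t) * q_eps e x + t * q_eps e y"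
    proof -
      have "\<forall>\<^sub>F e in at_right (0::real). e \<noteq> 0" by (metis (mono_tags, lifting) eventually_at_right_less eventually_mono less_numeral_extra(3))
      then show ?thesis
      proof (rule eventually_mono)
        fix e :: real assume "e \<noteq> 0"
        from convex_pos[OF this] t show "q_eps e ((1 - t) *\<^sub>R x + t *\<^sub>R y) \<le> (1 - t) * q_eps e x + t * q_eps e y"
          unfolding convex_on_def by (metis UNIV_I convex_onD[OF convex_pos[OF \<open>e \<noteq> 0\<close>]] less_eq_real_def)
      qed
    qed
    have l1: "((\<lambda>e. q_eps e ((1 - t) *\<^sub>R x + t *\<^sub>R y)) \<longlongrightarrow> q_eps 0 ((1 - t) *\<^sub>R x + t *\<^sub>R y)) (at_right 0)"
      by (rule q_cont)
    have l2: "((\<lambda>e. (1 - t) * q_eps e x + t * q_eps e y) \<longlongrightarrow> (1 - t) * q_eps 0 x + t * q_eps 0 y) (at_right 0)"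
      by (intro tendsto_intros q_cont)
    show "q_eps \<epsilon> ((1 - t) *\<^sub>R x + t *\<^sub>R y) \<le> (1 - t) * q_eps \<epsilon> x + t * q_eps \<epsilon> y"
      unfolding True by (rule tendsto_le[OF _ l2 l1 ev]) simp
  qed simp
qed



inductive_set smf :: "('a::real_normed_vector \<Rightarrow> real) set" where
  cst: "(\<lambda>x. c) \<in> smf"
| lin: "bounded_linear f \<Longrightarrow> f \<in> smf"
| add: "f \<in> smf \<Longrightarrow> g \<in> smf \<Longrightarrow> (\<lambda>x. f x + g x) \<in> smf"
| mul: "f \<in> smf \<Longrightarrow> g \<in> smf \<Longrightarrow> (\<lambda>x. f x * g x) \<in> smf"
| sq: "f \<in> smf \<Longrightarrow> (\<forall>x. f x > 0) \<Longrightarrow> (\<lambda>x. sqrt (f x)) \<in> smf"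
| isq: "f \<in> smf \<Longrightarrow> (\<forall>x. f x > 0) \<Longrightarrow> (\<lambda>x. inverse (sqrt (f x))) \<in> smf"

lemma DERIV_isqrt:
  assumes "(y::real) > 0"
  shows "((\<lambda>y. inverse (sqrt y)) has_real_derivative
     (inverse (sqrt y) * inverse (sqrt y) * inverse (sqrt y) * (-1/2))) (at y)"
proof -
  have h: "((\<lambda>y. inverse (sqrt y)) has_real_derivative (- ((inverse (sqrt y) / 2) * inverse (sqrt y ^ Suc (Suc 0))))) (at y)"
    by (rule DERIV_inverse_fun[OF DERIV_real_sqrt[OF assms]]) (use assms in simp)
  have eq: "- ((inverse (sqrt y) / 2) * inverse (sqrt y ^ Suc (Suc 0))) = inverse (sqrt y) * inverse (sqrt y) * inverse (sqrt y) * (-1/2)"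
    by (simp add: field_simps power2_eq_square)
  show ?thesis using h unfolding eq .
qed

lemma smf_smooth:
  assumes "f \<in> smf"
  shows "(\<forall>x. f differentiable (at x)) \<and> (\<forall>v. (\<lambda>x. frechet_derivative f (at x) v) \<in> smf)"
  using assms
proof induction
  case (cst c)
  have d: "frechet_derivative (\<lambda>x. c) (at x) = (\<lambda>h. 0)" for x :: 'a
    by (rule frechet_derivative_at[symmetric]) simp
  show ?case by (auto simp: d differentiable_const intro: smf.cst)
next
  case (lin f)
  have h: "(f has_derivative f) (at x)" for x
    using bounded_linear.has_derivative[OF lin has_derivative_ident] by simp
  then have d: "frechet_derivative f (at x) = f" for x
    by (rule frechet_derivative_at[symmetric])
  show ?case using h by (auto simp: d differentiable_def intro: smf.cst)
next
  case (add f g)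
  let ?F = "\<lambda>x. frechet_derivative f (at x)" and ?G = "\<lambda>x. frechet_derivative g (at x)"
  have h: "((\<lambda>x. f x + g x) has_derivative (\<lambda>h. ?F x h + ?G x h)) (at x)" for x
    using add by (intro has_derivative_add) (auto simp: frechet_derivative_works)
  then have d: "frechet_derivative (\<lambda>x. f x + g x) (at x) = (\<lambda>h. ?F x h + ?G x h)" for x
    by (rule frechet_derivative_at[symmetric])
  show ?case using h add by (auto simp: d differentiable_def intro: smf.add)
next
  case (mul f g)
  let ?F = "\<lambda>x. frechet_derivative f (at x)" and ?G = "\<lambda>x. frechet_derivative g (at x)"
  have h: "((\<lambda>x. f x * g x) has_derivative (\<lambda>h. f x * ?G x h + ?F x h * g x)) (at x)" for x
    using mul by (intro has_derivative_mult) (auto simp: frechet_derivative_works)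
  then have d: "frechet_derivative (\<lambda>x. f x * g x) (at x) = (\<lambda>h. f x * ?G x h + ?F x h * g x)" for x
    by (rule frechet_derivative_at[symmetric])
  show ?case using h mul by (auto simp: d differentiable_def intro!: smf.add smf.mul)
next
  case (sq f)
  let ?F = "\<lambda>x. frechet_derivative f (at x)"
  have h: "((\<lambda>x. sqrt (f x)) has_derivative (\<lambda>h. ?F x h * (inverse (sqrt (f x)) / 2))) (at x)" for x
    using sq by (intro DERIV_compose_FDERIV DERIV_real_sqrt) (auto simp: frechet_derivative_works)
  then have d: "frechet_derivative (\<lambda>x. sqrt (f x)) (at x) = (\<lambda>h. ?F x h * (inverse (sqrt (f x)) / 2))" for x
    by (rule frechet_derivative_at[symmetric])
  have "(\<lambda>x. ?F x v * (inverse (sqrt (f x)) * (1/2))) \<in> smf" for v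
    using sq by (intro smf.mul smf.isq smf.cst) auto
  then have m: "(\<lambda>x. ?F x v * (inverse (sqrt (f x)) / 2)) \<in> smf" for v
    by (simp only: divide_inverse mult_1_left)
  show ?case using h m by (auto simp: d differentiable_def)
next
  case (isq f)
  let ?F = "\<lambda>x. frechet_derivative f (at x)"
  let ?I = "\<lambda>x. inverse (sqrt (f x))"
  have h: "((\<lambda>x. inverse (sqrt (f x))) has_derivative (\<lambda>h. ?F x h * (?I x * ?I x * ?I x * (-1/2)))) (at x)" for x
    using isq by (intro DERIV_compose_FDERIV[where f = "\<lambda>y. inverse (sqrt y)"] DERIV_isqrt)
       (auto simp: frechet_derivative_works)
  then have d: "frechet_derivative (\<lambda>x. inverse (sqrt (f x))) (at x) = (\<lambda>h. ?F x h * (?I x * ?I x * ?I x * (-1/2)))" for x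
    by (rule frechet_derivative_at[symmetric])
  have "(\<lambda>x. ?I x * ?I x * ?I x * (-1/2)) \<in> smf"
    using isq by (intro smf.mul smf.isq smf.cst) auto
  then have m: "(\<lambda>x. ?F x v * (?I x * ?I x * ?I x * (-1/2))) \<in> smf" for v
    by (rule smf.mul[rotated]) (use isq in auto)
  show ?case using h m by (auto simp: d differentiable_def)
qed

lemma smf_C_inf: "f \<in> smf \<Longrightarrow> C_infinity f"
  unfolding C_infinity_def using smf_smooth by blast

lemma smf_diff: "f \<in> smf \<Longrightarrow> g \<in> smf \<Longrightarrow> (\<lambda>x. f x - g x) \<in> smf"
proof -
  assume "f \<in> smf" "g \<in> smf"
  then have "(\<lambda>x. f x + (-1) * g x) \<in> smf" by (intro smf.add smf.mul smf.cst)
  then show ?thesis by simp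
qed

lemma smf_entry: "(\<lambda>L::real^2^3. L $ k $ i) \<in> smf"
proof (rule smf.lin)
  show "bounded_linear (\<lambda>L::real^2^3. L $ k $ i)"
    using bounded_linear_compose[OF bounded_linear_vec_nth[of i] bounded_linear_vec_nth[of k]] by simp
qed

lemma smf_colinner: "(\<lambda>L::real^2^3. column i L \<bullet> column j L) \<in> smf"
proof -
  have "(\<lambda>L::real^2^3. column i L \<bullet> column j L) = (\<lambda>L. L$1$i * L$1$j + L$2$i * L$2$j + L$3$i * L$3$j)"
    by (simp add: inner_vec_def column_def sum_3)
  also have "\<dots> \<in> smf" by (intro smf.add smf.mul smf_entry)
  finally show ?thesis .
qed

lemma C_inf_q: "\<epsilon> > 0 \<Longrightarrow> C_infinity (q_eps \<epsilon>)"
proof -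
  assume e: "\<epsilon> > 0"
  define T where "T = (\<lambda>L::real^2^3. (\<epsilon>\<^sup>2 + column 1 L \<bullet> column 1 L) + (\<epsilon>\<^sup>2 + column 2 L \<bullet> column 2 L))"
  define D where "D = (\<lambda>L::real^2^3. (\<epsilon>\<^sup>2 + column 1 L \<bullet> column 1 L) * (\<epsilon>\<^sup>2 + column 2 L \<bullet> column 2 L) - (column 1 L \<bullet> column 2 L)^2)"
  have qe: "q_eps \<epsilon> = (\<lambda>L. sqrt (T L + 2 * sqrt (D L)))"
    by (rule ext) (simp add: q_explicit T_def D_def)
  have Dpos: "D L > 0" for L
    using det_pos[of \<epsilon> L] e unfolding D_def by (simp add: det_2 Meps_entries power2_eq_square)
  have T0: "T L \<ge> 0" for L by (simp add: T_def)
  have Ts: "T \<in> smf" unfolding T_def by (intro smf.add smf.cst smf_colinner)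
  have Ds: "D \<in> smf" unfolding D_def power2_eq_square by (intro smf_diff smf.add smf.mul smf.cst smf_colinner)
  have "(\<lambda>L. sqrt (T L + 2 * sqrt (D L))) \<in> smf"
  proof (rule smf.sq)
    show "(\<lambda>L. T L + 2 * sqrt (D L)) \<in> smf" using Ds Dpos by (intro smf.add smf.mul smf.cst smf.sq Ts) auto
    show "\<forall>x. 0 < T x + 2 * sqrt (D x)" using Dpos T0 by (simp add: add_nonneg_pos)
  qed
  then show ?thesis unfolding qe by (rule smf_C_inf)
qed



lemma sym_inner: "transpose A = A \<Longrightarrow> (A *v x) \<bullet> y = x \<bullet> (A *v y)" for A :: "real^'n^'n"
  by (metis dot_lmul_matrix vector_transpose_matrix)

lemma Amul_lin: "(A::real^'n^'n) *v (s *\<^sub>R u + t *\<^sub>R v) = s *\<^sub>R (A *v u) + t *\<^sub>R (A *v v)"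
  by (simp add: matrix_vector_right_distrib matrix_vector_mult_scaleR)

lemma psd_quad:
  fixes A :: "real^'n^'n"
  assumes A: "psd_matrix A"
  shows "0 \<le> u \<bullet> (A *v u)" and "(u \<bullet> (A *v v))^2 \<le> (u \<bullet> (A *v u)) * (v \<bullet> (A *v v))"
proof -
  show "0 \<le> u \<bullet> (A *v u)" using A unfolding psd_matrix_def by blast
  have sym: "transpose A = A" using A unfolding psd_matrix_def by blast
  have vu: "v \<bullet> (A *v u) = u \<bullet> (A *v v)"
    using sym_inner[OF sym, of v u] by (simp add: inner_commute)
  have "\<forall>s t. 0 \<le> (u \<bullet> (A *v u)) * s^2 + 2*(u \<bullet> (A *v v)) * s*t + (v \<bullet> (A *v v))*t^2"
  proof (intro allI)
    fix s t :: real
    have "0 \<le> (s *\<^sub>R u + t *\<^sub>R v) \<bullet> (A *v (s *\<^sub>R u + t *\<^sub>R v))" using A unfolding psd_matrix_def by blast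
    also have "\<dots> = (u \<bullet> (A *v u)) * s^2 + 2*(u \<bullet> (A *v v)) * s*t + (v \<bullet> (A *v v))*t^2"
      unfolding Amul_lin using vu by (simp add: inner_add_left inner_add_right power2_eq_square algebra_simps)
    finally show "0 \<le> (u \<bullet> (A *v u)) * s^2 + 2*(u \<bullet> (A *v v)) * s*t + (v \<bullet> (A *v v))*t^2" .
  qed
  from quad_nonneg[OF this] show "(u \<bullet> (A *v v))^2 \<le> (u \<bullet> (A *v u)) * (v \<bullet> (A *v v))" by simp
qed

lemma psd_zero:
  fixes A :: "real^'n^'n"
  assumes A: "psd_matrix A" and z: "u \<bullet> (A *v u) = 0"
  shows "A *v u = 0"
proof -
  have "(u \<bullet> (A *v (A *v u)))^2 \<le> 0" using psd_quad(2)[OF A, of u "A *v u"] z by simp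
  then have "u \<bullet> (A *v (A *v u)) = 0" by simp
  moreover have "u \<bullet> (A *v (A *v u)) = (A *v u) \<bullet> (A *v u)"
    using A unfolding psd_matrix_def by (metis sym_inner)
  ultimately show ?thesis by simp
qed

lemma column_mult: "column i (M ** L) = M *v column i L"
  by (simp add: column_def matrix_matrix_mult_def matrix_vector_mult_def vec_eq_iff)

lemma IA_mult: "(mat 1 + t *\<^sub>R A) *v x = x + t *\<^sub>R (A *v x)" for A :: "real^'n^'n"
  by (simp add: matrix_vector_mult_add_rdistrib scaleR_matrix_vector_assoc)

lemma mulv2: "(L::real^2^3) *v x = x$1 *\<^sub>R column 1 L + x$2 *\<^sub>R column 2 L"
  by (simp add: vec_eq_iff matrix_vector_mult_def sum_2 column_def algebra_simps)

lemma rank2_det: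
  fixes L :: "real^2^3"
  assumes r: "rank L = 2"
  shows "(column 1 L \<bullet> column 1 L) * (column 2 L \<bullet> column 2 L) - (column 1 L \<bullet> column 2 L)^2 > 0"
proof -
  define l1 where "l1 = column 1 L"
  define l2 where "l2 = column 2 L"
  define g11 where "g11 = l1 \<bullet> l1"
  define g22 where "g22 = l2 \<bullet> l2"
  define g12 where "g12 = l1 \<bullet> l2"
  have inj: "inj ((*v) L)" using r full_rank_injective[of L] by simp
  have cs: "g12^2 \<le> g11 * g22" unfolding g11_def g22_def g12_def by (rule Cauchy_Schwarz_ineq)
  have key: "(g22 *\<^sub>R l1 - g12 *\<^sub>R l2) \<bullet> (g22 *\<^sub>R l1 - g12 *\<^sub>R l2) = g22 * (g11 * g22 - g12^2)"
    by (simp add: inner_diff_left inner_diff_right g11_def g22_def g12_def inner_commute power2_eq_square algebra_simps)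
  show ?thesis
  proof (rule ccontr)
    assume "\<not> ?thesis"
    then have "g11 * g22 - g12^2 = 0" using cs unfolding g11_def g22_def g12_def l1_def l2_def by linarith
    then have "g22 *\<^sub>R l1 - g12 *\<^sub>R l2 = 0" using key by simp
    then have "L *v (vector [g22, - g12]) = L *v 0" by (simp add: mulv2 l1_def l2_def)
    then have "(vector [g22, - g12] :: real^2) = 0" using inj by (meson injD)
    then have "g22 = 0" by (metis vector_2(1) zero_index)
    then have "l2 = 0" by (simp add: g22_def)
    then have "L *v axis 2 1 = L *v 0" by (simp add: matrix_vector_mult_basis l2_def)
    then have "(axis 2 1 :: real^2) = 0" using inj by (meson injD)
    then show False by (metis axis_nth zero_index zero_neq_one)
  qed
qed



lemma dpoly: "((\<lambda>t. a + 2*t*b + t^2*c) has_real_derivative 2*b) (at (0::real))"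
  by (auto intro!: derivative_eq_intros)

lemma deriv_main:
  fixes a1 a2 a3 b1 b2 b3 c1 c2 c3 :: real
  assumes D0: "a1 * a2 - a3^2 > 0" and a1: "a1 \<ge> 0" and a2: "a2 \<ge> 0"
  shows "((\<lambda>t. sqrt ((a1 + 2*t*b1 + t^2*c1) + (a2 + 2*t*b2 + t^2*c2)
     + 2 * sqrt ((a1 + 2*t*b1 + t^2*c1) * (a2 + 2*t*b2 + t^2*c2) - (a3 + 2*t*b3 + t^2*c3)^2)))
   has_real_derivative
     ((2*b1 + 2*b2 + 2 * ((2*b1*a2 + 2*a1*b2 - 4*a3*b3) * (inverse (sqrt (a1*a2 - a3^2)) / 2)))
       * (inverse (sqrt (a1 + a2 + 2 * sqrt (a1*a2 - a3^2))) / 2))) (at 0)"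
proof -
  define P1 where "P1 = (\<lambda>t::real. a1 + 2*t*b1 + t^2*c1)"
  define P2 where "P2 = (\<lambda>t::real. a2 + 2*t*b2 + t^2*c2)"
  define P3 where "P3 = (\<lambda>t::real. a3 + 2*t*b3 + t^2*c3)"
  have h1: "(P1 has_real_derivative 2*b1) (at 0)" unfolding P1_def by (rule dpoly)
  have h2: "(P2 has_real_derivative 2*b2) (at 0)" unfolding P2_def by (rule dpoly)
  have h3: "(P3 has_real_derivative 2*b3) (at 0)" unfolding P3_def by (rule dpoly)
  have v: "P1 0 = a1" "P2 0 = a2" "P3 0 = a3" by (simp_all add: P1_def P2_def P3_def)
  have hD: "((\<lambda>t. P1 t * P2 t - P3 t ^ 2) has_real_derivative (2*b1*a2 + 2*a1*b2 - 4*a3*b3)) (at 0)"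
    using DERIV_diff[OF DERIV_mult[OF h1 h2] DERIV_power[OF h3, of 2]] by (simp add: v algebra_simps)
  have hS: "((\<lambda>t. sqrt (P1 t * P2 t - P3 t ^ 2)) has_real_derivative
      (inverse (sqrt (a1*a2 - a3^2)) / 2) * (2*b1*a2 + 2*a1*b2 - 4*a3*b3)) (at 0)"
    using DERIV_chain2[OF DERIV_real_sqrt hD] D0 by (simp add: v)
  have hT: "((\<lambda>t. P1 t + P2 t + 2 * sqrt (P1 t * P2 t - P3 t ^ 2)) has_real_derivative
      2*b1 + 2*b2 + 2 * ((inverse (sqrt (a1*a2 - a3^2)) / 2) * (2*b1*a2 + 2*a1*b2 - 4*a3*b3))) (at 0)"
    by (intro DERIV_add DERIV_cmult h1 h2 hS)
  have s0: "a1 + a2 + 2 * sqrt (a1*a2 - a3^2) > 0" using D0 a1 a2 by (simp add: add_nonneg_pos)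
  have hF: "((\<lambda>t. sqrt (P1 t + P2 t + 2 * sqrt (P1 t * P2 t - P3 t ^ 2))) has_real_derivative
      (inverse (sqrt (a1 + a2 + 2 * sqrt (a1*a2 - a3^2))) / 2) *
      (2*b1 + 2*b2 + 2 * ((inverse (sqrt (a1*a2 - a3^2)) / 2) * (2*b1*a2 + 2*a1*b2 - 4*a3*b3)))) (at 0)"
    using DERIV_chain2[OF DERIV_real_sqrt hT] s0 by (simp add: v)
  then show ?thesis unfolding P1_def P2_def P3_def by (simp add: algebra_simps)
qed



lemma partc:
  fixes L :: "real^2^3" and A :: "real^3^3"
  assumes e: "\<epsilon> \<ge> 0" and A: "psd_matrix A" and r: "\<epsilon> = 0 \<longrightarrow> rank L = 2"
  shows "(\<lambda>t. q_eps \<epsilon> ((mat 1 + t *\<^sub>R A) ** L)) differentiable (at 0)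
     \<and> deriv (\<lambda>t. q_eps \<epsilon> ((mat 1 + t *\<^sub>R A) ** L)) 0 \<ge> 0
     \<and> (A ** L \<noteq> 0 \<longrightarrow> deriv (\<lambda>t. q_eps \<epsilon> ((mat 1 + t *\<^sub>R A) ** L)) 0 > 0)"
proof -
  define l1 where "l1 = column 1 L"
  define l2 where "l2 = column 2 L"
  define w1 where "w1 = A *v l1"
  define w2 where "w2 = A *v l2"
  have sym: "transpose A = A" using A unfolding psd_matrix_def by blast
  have wl: "w1 \<bullet> l2 = l1 \<bullet> w2" unfolding w1_def w2_def by (rule sym_inner[OF sym])
  define a1 where "a1 = \<epsilon>\<^sup>2 + l1 \<bullet> l1"
  define a2 where "a2 = \<epsilon>\<^sup>2 + l2 \<bullet> l2"
  define a3 where "a3 = l1 \<bullet> l2"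
  define b1 where "b1 = l1 \<bullet> w1"
  define b2 where "b2 = l2 \<bullet> w2"
  define b3 where "b3 = l1 \<bullet> w2"
  define c1 where "c1 = w1 \<bullet> w1"
  define c2 where "c2 = w2 \<bullet> w2"
  define c3 where "c3 = w1 \<bullet> w2"
  have col1: "column 1 ((mat 1 + t *\<^sub>R A) ** L) = l1 + t *\<^sub>R w1" for t
    by (simp add: column_mult IA_mult l1_def w1_def)
  have col2: "column 2 ((mat 1 + t *\<^sub>R A) ** L) = l2 + t *\<^sub>R w2" for t
    by (simp add: column_mult IA_mult l2_def w2_def)
  have i1: "\<epsilon>\<^sup>2 + (l1 + t *\<^sub>R w1) \<bullet> (l1 + t *\<^sub>R w1) = a1 + 2*t*b1 + t^2*c1" for t
    by (simp add: a1_def b1_def c1_def inner_add_left inner_add_right inner_commute power2_eq_square algebra_simps)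
  have i2: "\<epsilon>\<^sup>2 + (l2 + t *\<^sub>R w2) \<bullet> (l2 + t *\<^sub>R w2) = a2 + 2*t*b2 + t^2*c2" for t
    by (simp add: a2_def b2_def c2_def inner_add_left inner_add_right inner_commute power2_eq_square algebra_simps)
  have i3: "(l1 + t *\<^sub>R w1) \<bullet> (l2 + t *\<^sub>R w2) = a3 + 2*t*b3 + t^2*c3" for t
    using wl by (simp add: a3_def b3_def c3_def inner_add_left inner_add_right power2_eq_square algebra_simps)
  have Feq: "(\<lambda>t. q_eps \<epsilon> ((mat 1 + t *\<^sub>R A) ** L)) = (\<lambda>t. sqrt ((a1 + 2*t*b1 + t^2*c1) + (a2 + 2*t*b2 + t^2*c2)
     + 2 * sqrt ((a1 + 2*t*b1 + t^2*c1) * (a2 + 2*t*b2 + t^2*c2) - (a3 + 2*t*b3 + t^2*c3)^2)))"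
    by (rule ext) (simp only: q_explicit col1 col2 i1 i2 i3)
  have D0: "a1 * a2 - a3^2 > 0"
  proof (cases "\<epsilon> = 0")
    case True
    then show ?thesis using rank2_det[of L] r by (simp add: a1_def a2_def a3_def l1_def l2_def)
  next
    case False
    then show ?thesis using det_pos[OF False, of L]
      by (simp add: det_2 Meps_entries a1_def a2_def a3_def l1_def l2_def power2_eq_square)
  qed
  have a10: "a1 \<ge> 0" and a20: "a2 \<ge> 0" by (simp_all add: a1_def a2_def)
  define X where "X = (2*b1 + 2*b2 + 2 * ((2*b1*a2 + 2*a1*b2 - 4*a3*b3) * (inverse (sqrt (a1*a2 - a3^2)) / 2)))
       * (inverse (sqrt (a1 + a2 + 2 * sqrt (a1*a2 - a3^2))) / 2)"
  have hd: "((\<lambda>t. q_eps \<epsilon> ((mat 1 + t *\<^sub>R A) ** L)) has_real_derivative X) (at 0)"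
    unfolding Feq X_def by (rule deriv_main[OF D0 a10 a20])
  have dif: "(\<lambda>t. q_eps \<epsilon> ((mat 1 + t *\<^sub>R A) ** L)) differentiable (at 0)"
    using hd by (metis differentiableI has_field_derivative_imp_has_derivative)
  have dv: "deriv (\<lambda>t. q_eps \<epsilon> ((mat 1 + t *\<^sub>R A) ** L)) 0 = X" using hd by (rule DERIV_imp_deriv)
  have b10: "b1 \<ge> 0" and b20: "b2 \<ge> 0" unfolding b1_def b2_def w1_def w2_def by (simp_all add: psd_quad(1)[OF A])
  have b3: "b3^2 \<le> b1 * b2" unfolding b1_def b2_def b3_def w1_def w2_def by (rule psd_quad(2)[OF A])
  have a3: "a3^2 \<le> a1 * a2" using D0 by simp
  have mix: "2*a3*b3 \<le> a1*b2 + a2*b1" by (rule mixed_nonneg[OF a10 a20 a3 b10 b20 b3])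
  have Dp: "0 \<le> 2*b1*a2 + 2*a1*b2 - 4*a3*b3" using mix by (simp add: algebra_simps)
  have s0: "a1 + a2 + 2 * sqrt (a1*a2 - a3^2) > 0" using D0 a10 a20 by (simp add: add_nonneg_pos)
  have k1: "inverse (sqrt (a1*a2 - a3^2)) / 2 > 0" using D0 by simp
  have k2: "inverse (sqrt (a1 + a2 + 2 * sqrt (a1*a2 - a3^2))) / 2 > 0" using s0 by simp
  have m0: "0 \<le> (2*b1*a2 + 2*a1*b2 - 4*a3*b3) * (inverse (sqrt (a1*a2 - a3^2)) / 2)"
    using Dp k1 by simp
  have X0: "X \<ge> 0" unfolding X_def using b10 b20 m0 k2 by (intro mult_nonneg_nonneg) auto
  have Xpos: "X > 0" if "A ** L \<noteq> 0"
  proof -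
    have "w1 \<noteq> 0 \<or> w2 \<noteq> 0"
    proof (rule ccontr)
      assume "\<not> (w1 \<noteq> 0 \<or> w2 \<noteq> 0)"
      then have c12: "column 1 (A ** L) = 0" "column 2 (A ** L) = 0"
        by (auto simp: column_mult w1_def w2_def l1_def l2_def)
      have "column i (A ** L) = 0" for i :: 2
        using exhaust_2[of i] c12 by auto
      then have "A ** L = 0" by (metis (no_types) column_def vec_eq_iff vec_lambda_beta zero_index)
      then show False using that by simp
    qed
    then have "b1 > 0 \<or> b2 > 0"
      using psd_zero[OF A, of l1] psd_zero[OF A, of l2] b10 b20 unfolding b1_def b2_def w1_def w2_def by force
    then have "2*b1 + 2*b2 + 2 * ((2*b1*a2 + 2*a1*b2 - 4*a3*b3) * (inverse (sqrt (a1*a2 - a3^2)) / 2)) > 0"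
      using b10 b20 m0 by linarith
    then show ?thesis unfolding X_def using k2 by simp
  qed
  show ?thesis using dif dv X0 Xpos by simp
qed


theorem lemmaA4:
  shows "(\<forall>(\<epsilon>::real) (L::real^2^3). \<epsilon> \<ge> 0 \<longrightarrow>
            q_eps \<epsilon> L = sqrt (trace (\<epsilon>\<^sup>2 *\<^sub>R mat 1 + transpose L ** L)
                             + 2 * sqrt (det (\<epsilon>\<^sup>2 *\<^sub>R mat 1 + transpose L ** L))))
       \<and> (\<forall>\<epsilon>::real. \<epsilon> > 0 \<longrightarrow> C_infinity (q_eps \<epsilon>))
       \<and> (\<forall>\<epsilon>::real. \<epsilon> \<ge> 0 \<longrightarrow> convex_on UNIV (q_eps \<epsilon>))
       \<and> (\<forall>(\<epsilon>::real) (L::real^2^3) (A::real^3^3).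
            \<epsilon> \<ge> 0 \<longrightarrow> psd_matrix A \<longrightarrow> (\<epsilon> = 0 \<longrightarrow> rank L = 2) \<longrightarrow>
            ((\<lambda>t. q_eps \<epsilon> ((mat 1 + t *\<^sub>R A) ** L)) differentiable (at 0)
             \<and> deriv (\<lambda>t. q_eps \<epsilon> ((mat 1 + t *\<^sub>R A) ** L)) 0 \<ge> 0
             \<and> (A ** L \<noteq> 0 \<longrightarrow> deriv (\<lambda>t. q_eps \<epsilon> ((mat 1 + t *\<^sub>R A) ** L)) 0 > 0)))"
proof (intro conjI allI impI)
  fix \<epsilon> :: real and L :: "real^2^3"
  show "q_eps \<epsilon> L = sqrt (trace (\<epsilon>\<^sup>2 *\<^sub>R mat 1 + transpose L ** L)
                             + 2 * sqrt (det (\<epsilon>\<^sup>2 *\<^sub>R mat 1 + transpose L ** L)))"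
    using q_formula[of \<epsilon> L] by (simp only: Meps_def)
next
  fix \<epsilon> :: real
  assume "\<epsilon> > 0"
  then show "C_infinity (q_eps \<epsilon>)" by (rule C_inf_q)
next
  fix \<epsilon> :: real
  show "convex_on UNIV (q_eps \<epsilon>)" by (rule convex_all)
next
  fix \<epsilon> :: real and L :: "real^2^3" and A :: "real^3^3"
  assume "\<epsilon> \<ge> 0" "psd_matrix A" "\<epsilon> = 0 \<longrightarrow> rank L = 2"
  note pc = partc[OF this]
  show "(\<lambda>t. q_eps \<epsilon> ((mat 1 + t *\<^sub>R A) ** L)) differentiable (at 0)" using pc by blast
  show "deriv (\<lambda>t. q_eps \<epsilon> ((mat 1 + t *\<^sub>R A) ** L)) 0 \<ge> 0" using pc by blast
  show "A ** L \<noteq> 0 \<Longrightarrow> deriv (\<lambda>t. q_eps \<epsilon> ((mat 1 + t *\<^sub>R A) ** L)) 0 > 0" using pc by blast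
qed

end
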